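(* For integers $1\le i<r$, \[ C_{i+1,r}=C_{i,r}+\sum_{k=r-i+1}^{r-1}C_{r-i+1,k}\,C_{r-k,r-k}-\sum_{k=i}^{r-1}C_{i,k}\,C_{r-k,r-k}, \] with initial values $C_{1,r}=(-1)^r/(r+1)$ for $r\ge1$.
   Context: Bernoulli numbers $B_n$ are defined by $\sum_{n\ge0}B_n x^n/n! = xe^x/(e^x-1)$. For a finite set $S\subset\mathbb Z_{\ge0}^r$, $C(S)=(-1)^r\sum_{(n_1,\dots,n_r)\in S}\prod_{j}B_{n_j}/n_j!$. For $1\le i\le r$, $C_{i,r}=C(S)$ where $S$ is the set of $(n_1,\dots,n_r)\in\mathbb Z_{\ge0}^r$ with $n_1+\dots+n_r=r$, $n_1+\dots+n_j<j$ for $1\le j<i$, and $n_{j+1}+\dots+n_r\le r-j$ for $i\le j<r$. (These are the coefficients $C^{(1,\dots,1,0,\dots,0)}$ with $i-1$ ones and $r-i$ zeros of the asymptotic expansion of the Euler–Zagier multiple zeta function at the origin.) *)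

theory Defs
  imports Complex_Main "HOL-Computational_Algebra.Formal_Power_Series"
begin

text \<open>Bernoulli numbers with the convention  x e^x / (e^x - 1) = sum B_n x^n / n!
  (so B_1 = +1/2), defined as coefficients of the formal power series.\<close>
definition bernoulli_gf :: "real fps" where
  "bernoulli_gf = fps_X * fps_exp 1 / (fps_exp 1 - 1)"

definition bern :: "nat \<Rightarrow> real" where
  "bern n = fact n * fps_nth bernoulli_gf n"

text \<open>Tuples (n_1,...,n_r) are functions nat => nat supported on {1..r}.
  C(S) = (-1)^r * sum over S of prod_j B_{n_j}/n_j!.\<close>
definition Cset :: "nat \<Rightarrow> (nat \<Rightarrow> nat) set \<Rightarrow> real" where
  "Cset r S = (-1) ^ r * (\<Sum>n\<in>S. \<Prod>j=1..r. bern (n j) / fact (n j))"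

definition Sidx :: "nat \<Rightarrow> nat \<Rightarrow> (nat \<Rightarrow> nat) set" where
  "Sidx i r = {n. (\<forall>j. j \<notin> {1..r} \<longrightarrow> n j = 0)
      \<and> (\<Sum>j=1..r. n j) = r
      \<and> (\<forall>j. 1 \<le> j \<and> j < i \<longrightarrow> (\<Sum>l=1..j. n l) < j)
      \<and> (\<forall>j. i \<le> j \<and> j < r \<longrightarrow> (\<Sum>l=j+1..r. n l) \<le> r - j)}"

definition Ccoef :: "nat \<Rightarrow> nat \<Rightarrow> real" where
  "Ccoef i r = Cset r (Sidx i r)"

end

theory Submission
  imports Defs
begin

unbundle fps_syntax


definition Lg :: "real fps" where "Lg = Abs_fps (\<lambda>n. if n = 0 then 0 else 1 / real n)"
definition Dg :: "real fps" where "Dg = Abs_fps (\<lambda>n. 1 / (real n + 1))"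

lemma Lg_eq: "Lg = fps_X * Dg"
  by (auto simp: fps_eq_iff Lg_def Dg_def of_nat_diff)

lemma Lg0 [simp]: "Lg $ 0 = 0" by (simp add: Lg_def)

lemma bern_eq: "bern n / fact n = bernoulli_gf $ n"
  by (simp add: bern_def)

lemma phi_mul: "bernoulli_gf * (fps_exp 1 - 1) = fps_X * fps_exp 1"
proof -
  have s1: "subdegree (fps_exp (1::real) - 1) = 1"
    by (rule subdegreeI) auto
  have s2: "subdegree (fps_X * fps_exp (1::real)) = 1"
    by (rule subdegreeI) auto
  have nz: "fps_exp (1::real) - 1 \<noteq> 0"
  proof
    assume "fps_exp (1::real) - 1 = 0"
    then have "(fps_exp (1::real) - 1) $ 1 = 0" by simp
    then show False by simp
  qed
  show ?thesis unfolding bernoulli_gf_def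
    by (rule fps_times_divide_eq[OF nz]) (use s1 s2 in linarith)
qed

lemma phi0 [simp]: "bernoulli_gf $ 0 = 1"
proof -
  have "(bernoulli_gf * (fps_exp 1 - 1)) $ 1 = (fps_X * fps_exp (1::real)) $ 1"
    by (simp add: phi_mul)
  then show ?thesis by (simp add: fps_mult_nth_1)
qed

lemma deriv_Lg: "fps_deriv Lg * (1 - fps_X) = 1"
proof -
  have d: "fps_deriv Lg = Abs_fps (\<lambda>n. 1)"
    by (simp add: fps_eq_iff Lg_def fps_deriv_def del: of_nat_Suc)
  have "Abs_fps (\<lambda>n. 1::real) * (1 - fps_X) = Abs_fps (\<lambda>n. 1) - Abs_fps (\<lambda>n. 1) * fps_X"
    by (simp add: right_diff_distrib)
  also have "\<dots> = 1" by (simp add: fps_eq_iff)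
  finally show ?thesis by (simp add: d)
qed

lemma exp_Lg: "(fps_exp 1 oo Lg) * (1 - fps_X) = 1"
proof -
  define G where "G = fps_exp (1::real) oo Lg"
  have dG: "fps_deriv G = G * fps_deriv Lg"
    unfolding G_def by (simp add: fps_compose_deriv)
  have "fps_deriv (G * (1 - fps_X)) = 0"
  proof -
    have "fps_deriv (G * (1 - fps_X)) = fps_deriv G * (1 - fps_X) - G"
      by (simp add: fps_deriv_mult algebra_simps)
    also have "\<dots> = G * (fps_deriv Lg * (1 - fps_X)) - G" by (simp add: dG mult.assoc)
    also have "\<dots> = 0" by (simp add: deriv_Lg)
    finally show ?thesis .
  qed
  then have "G * (1 - fps_X) = fps_const ((G * (1 - fps_X)) $ 0)" using fps_deriv_eq_0_iff by blast
  also have "\<dots> = 1" by (simp add: G_def)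
  finally show ?thesis by (simp add: G_def)
qed

lemma phi_Lg: "bernoulli_gf oo Lg = Dg"
proof -
  define G where "G = fps_exp (1::real) oo Lg"
  have "(bernoulli_gf * (fps_exp 1 - 1)) oo Lg = (fps_X * fps_exp 1) oo Lg"
    by (simp add: phi_mul)
  then have e: "(bernoulli_gf oo Lg) * (G - 1) = Lg * G"
    by (simp add: fps_compose_mult_distrib fps_compose_sub_distrib G_def)
  have g1: "G * (1 - fps_X) = 1" using exp_Lg by (simp add: G_def)
  have "(bernoulli_gf oo Lg) * fps_X = (bernoulli_gf oo Lg) * (G * (1 - fps_X) - (1 - fps_X))"
    by (simp add: g1)
  also have "\<dots> = (bernoulli_gf oo Lg) * (G - 1) * (1 - fps_X)" by (simp add: algebra_simps)
  also have "\<dots> = Lg * (G * (1 - fps_X))" by (simp add: e mult.assoc)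
  also have "\<dots> = Lg" by (simp add: g1)
  finally have "(bernoulli_gf oo Lg) * fps_X = Lg" .
  then have "fps_X * (bernoulli_gf oo Lg) = fps_X * Dg" by (simp add: Lg_eq mult.commute)
  then show ?thesis by simp
qed


definition bb :: "nat \<Rightarrow> real" where "bb n = bernoulli_gf $ n"
definition al :: "nat \<Rightarrow> nat \<Rightarrow> real" where "al p g = (Lg ^ g) $ p"
definition be :: "nat \<Rightarrow> nat \<Rightarrow> real" where "be q h = (Lg ^ h * Dg) $ q"

lemma bb0 [simp]: "bb 0 = 1" by (simp add: bb_def)

lemma Lg_pow_nth_zero: "p < g \<Longrightarrow> (Lg ^ g) $ p = 0"
  using startsby_zero_power_prefix[of Lg g] by simp

lemma al_zero: "p < g \<Longrightarrow> al p g = 0"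
  by (simp add: al_def Lg_pow_nth_zero)

lemma be_zero: "q < h \<Longrightarrow> be q h = 0"
proof -
  assume "q < h"
  have "(Lg ^ h * Dg) $ q = (\<Sum>i=0..q. (Lg ^ h) $ i * Dg $ (q - i))" by (simp add: fps_mult_nth)
  also have "\<dots> = 0" using \<open>q < h\<close> by (intro sum.neutral) (auto simp: Lg_pow_nth_zero)
  finally show ?thesis by (simp add: be_def)
qed

lemma compose_mult_nth:
  fixes a B F :: "real fps"
  assumes F0: "F $ 0 = 0"
  shows "((a oo F) * B) $ n = (\<Sum>k=0..n. a $ k * (F ^ k * B) $ n)"
proof -
  have z: "\<And>k i. i < k \<Longrightarrow> (F ^ k) $ i = 0" using startsby_zero_power_prefix[OF F0] by blast
  have "((a oo F) * B) $ n = (\<Sum>i=0..n. (\<Sum>k=0..i. a $ k * (F ^ k) $ i) * B $ (n - i))"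
    by (simp add: fps_mult_nth fps_compose_nth)
  also have "\<dots> = (\<Sum>i=0..n. (\<Sum>k=0..n. a $ k * (F ^ k) $ i) * B $ (n - i))"
  proof (rule sum.cong[OF refl])
    fix i assume i: "i \<in> {0..n}"
    have "(\<Sum>k=0..n. a $ k * (F ^ k) $ i) = (\<Sum>k=0..i. a $ k * (F ^ k) $ i)"
      using i by (intro sum.mono_neutral_right) (auto simp: z)
    then show "(\<Sum>k=0..i. a $ k * (F ^ k) $ i) * B $ (n - i) = (\<Sum>k=0..n. a $ k * (F ^ k) $ i) * B $ (n - i)"
      by simp
  qed
  also have "\<dots> = (\<Sum>k=0..n. a $ k * (\<Sum>i=0..n. (F ^ k) $ i * B $ (n - i)))"
    by (simp add: sum_distrib_left sum_distrib_right mult.assoc) (rule sum.swap)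
  also have "\<dots> = (\<Sum>k=0..n. a $ k * (F ^ k * B) $ n)"
    by (simp add: fps_mult_nth)
  finally show ?thesis .
qed

lemma Dg_compose: "Dg = bernoulli_gf oo Lg" by (simp add: phi_Lg)

lemma Lg_pow_Suc: "Lg ^ Suc g = fps_X * (Dg * Lg ^ g)"
  by (simp add: Lg_eq mult.assoc)

lemma be_ext: "L + 1 \<le> M \<Longrightarrow>
  (\<Sum>n=0..M. bb n * (if 1 \<le> h + n then be L (h + n - 1) else 0))
      = (\<Sum>n=0..L+1. bb n * (if 1 \<le> h + n then be L (h + n - 1) else 0))"
  by (rule sum.mono_neutral_right) (auto simp: be_zero)

lemma be_rec0: "be (Suc L) 0 = (\<Sum>n=0..L+1. bb n * (if 1 \<le> 0 + n then be L (0 + n - 1) else 0))"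
proof -
  have "be (Suc L) 0 = Dg $ Suc L" by (simp add: be_def)
  also have "\<dots> = (\<Sum>n=0..Suc L. bb n * (Lg ^ n) $ Suc L)"
    by (simp add: Dg_compose fps_compose_nth bb_def)
  also have "\<dots> = (\<Sum>n=0..Suc L. bb n * (if 1 \<le> 0 + n then be L (0 + n - 1) else 0))"
  proof (rule sum.cong[OF refl])
    fix n assume "n \<in> {0..Suc L}"
    show "bb n * (Lg ^ n) $ Suc L = bb n * (if 1 \<le> 0 + n then be L (0 + n - 1) else 0)"
    proof (cases n)
      case (Suc m) then show ?thesis by (simp add: Lg_pow_Suc be_def mult.commute del: power_Suc)
    qed simp
  qed
  finally show ?thesis by simp
qed

lemma be_recS: "be (Suc L) (Suc h') = (\<Sum>n=0..L+1. bb n * (if 1 \<le> Suc h' + n then be L (Suc h' + n - 1) else 0))"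
proof -
  have "be (Suc L) (Suc h') = (Dg * (Lg ^ h' * Dg)) $ L"
    by (simp add: be_def Lg_pow_Suc mult.assoc del: power_Suc)
  also have "\<dots> = (\<Sum>k=0..L. bb k * (Lg ^ k * (Lg ^ h' * Dg)) $ L)"
    by (simp add: Dg_compose compose_mult_nth bb_def)
  also have "\<dots> = (\<Sum>k=0..L. bb k * be L (Suc h' + k - 1))"
    by (simp add: be_def power_add mult_ac)
  also have "\<dots> = (\<Sum>n=0..L+1. bb n * (if 1 \<le> Suc h' + n then be L (Suc h' + n - 1) else 0))"
    by (simp add: be_zero add.commute)
  finally show ?thesis .
qed

lemma be_rec: "L + 1 \<le> M \<Longrightarrow>
  be (Suc L) h = (\<Sum>n=0..M. bb n * (if 1 \<le> h + n then be L (h + n - 1) else 0))"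
  apply (subst be_ext, assumption)
  apply (cases h)
  using be_rec0 be_recS by auto

definition A :: "nat \<Rightarrow> nat \<Rightarrow> real" where
  "A L s = (if s \<le> L then al L (L - s) else 0)"

lemma al_rec: "L + 1 \<le> M \<Longrightarrow>
  A (Suc L) s = (if s < Suc L then (\<Sum>n=0..M. bb n * (if n \<le> s then A L (s - n) else 0)) else 0)"
proof -
  assume LM: "L + 1 \<le> M"
  show ?thesis
  proof (cases "s < Suc L")
    case False
    then show ?thesis by (auto simp: A_def al_def)
  next
    case True
    define g where "g = L - s"
    have sL: "s \<le> L" using True by simp
    have "A (Suc L) s = (Lg ^ Suc g) $ Suc L" using sL by (simp add: A_def al_def g_def Suc_diff_le)
    also have "\<dots> = ((bernoulli_gf oo Lg) * Lg ^ g) $ L"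
      by (simp only: Lg_pow_Suc Dg_compose) simp
    also have "\<dots> = (\<Sum>k=0..L. bb k * al L (k + g))"
      by (simp add: compose_mult_nth bb_def al_def power_add)
    also have "\<dots> = (\<Sum>k=0..s. bb k * al L (k + g))"
      by (rule sum.mono_neutral_right) (auto simp: sL al_zero g_def)
    also have "\<dots> = (\<Sum>n=0..M. bb n * (if n \<le> s then A L (s - n) else 0))"
    proof (rule sum.mono_neutral_cong_left)
      show "\<forall>i\<in>{0..M} - {0..s}. bb i * (if i \<le> s then A L (s - i) else 0) = 0" by auto
      show "\<And>x. x \<in> {0..s} \<Longrightarrow> bb x * al L (x + g) = bb x * (if x \<le> s then A L (s - x) else 0)"
        using sL by (auto simp: A_def g_def add.commute)
    qed (use sL LM in auto)
    finally show ?thesis using True by simp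
  qed
qed



definition Lst :: "nat \<Rightarrow> nat \<Rightarrow> nat list set" where
  "Lst M L = {xs. set xs \<subseteq> {0..M} \<and> length xs = L}"

lemma finite_Lst [simp]: "finite (Lst M L)"
  unfolding Lst_def by (rule finite_lists_length_eq) simp

lemma Lst_0 [simp]: "Lst M 0 = {[]}" by (auto simp: Lst_def)

lemma Lst_split_img: "Lst M (a + Suc c) = (\<lambda>(ys,n,zs). ys @ n # zs) ` (Lst M a \<times> {0..M} \<times> Lst M c)"
proof
  show "Lst M (a + Suc c) \<subseteq> (\<lambda>(ys,n,zs). ys @ n # zs) ` (Lst M a \<times> {0..M} \<times> Lst M c)"
  proof
    fix xs assume xs: "xs \<in> Lst M (a + Suc c)"
    then have len: "length xs = a + Suc c" and st: "set xs \<subseteq> {0..M}" by (auto simp: Lst_def)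
    have a: "a < length xs" using len by simp
    have e: "xs = take a xs @ xs ! a # drop (Suc a) xs" using id_take_nth_drop[OF a] .
    have s1: "set (take a xs) \<subseteq> {0..M}" using st set_take_subset by (metis subset_trans)
    have s2: "set (drop (Suc a) xs) \<subseteq> {0..M}" using st set_drop_subset by (metis subset_trans)
    have s3: "xs ! a \<in> {0..M}" using st nth_mem[OF a] by blast
    have "(take a xs, xs ! a, drop (Suc a) xs) \<in> Lst M a \<times> {0..M} \<times> Lst M c"
      using s1 s2 s3 len by (simp add: Lst_def)
    moreover have "xs = (\<lambda>(ys,n,zs). ys @ n # zs) (take a xs, xs ! a, drop (Suc a) xs)"
      using e by simp
    ultimately show "xs \<in> (\<lambda>(ys,n,zs). ys @ n # zs) ` (Lst M a \<times> {0..M} \<times> Lst M c)"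
      by (rule rev_image_eqI)
  qed
  show "(\<lambda>(ys,n,zs). ys @ n # zs) ` (Lst M a \<times> {0..M} \<times> Lst M c) \<subseteq> Lst M (a + Suc c)"
    by (fastforce simp: Lst_def subset_iff)
qed

lemma inj_split: "inj_on (\<lambda>(ys,n,zs). ys @ n # zs) (Lst M a \<times> {0..M} \<times> Lst M c)"
proof (rule inj_onI)
  fix x y assume x: "x \<in> Lst M a \<times> {0..M} \<times> Lst M c" and y: "y \<in> Lst M a \<times> {0..M} \<times> Lst M c"
    and e: "(\<lambda>(ys,n,zs). ys @ n # zs) x = (\<lambda>(ys,n,zs). ys @ n # zs) y"
  obtain ys n zs where xx: "x = (ys, n, zs)" by (cases x) auto
  obtain ys' n' zs' where yy: "y = (ys', n', zs')" by (cases y) auto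
  have l: "length ys = length ys'" using x y xx yy by (simp add: Lst_def)
  have "ys @ n # zs = ys' @ n' # zs'" using e xx yy by simp
  then show "x = y" using l xx yy by (simp add: append_eq_append_conv)
qed

lemma sum_Lst_split:
  "(\<Sum>xs\<in>Lst M (a + Suc c). f xs) = (\<Sum>ys\<in>Lst M a. \<Sum>n=0..M. \<Sum>zs\<in>Lst M c. f (ys @ n # zs))"
proof -
  have "(\<Sum>xs\<in>Lst M (a + Suc c). f xs) = (\<Sum>x\<in>Lst M a \<times> {0..M} \<times> Lst M c. f ((\<lambda>(ys,n,zs). ys @ n # zs) x))"
    unfolding Lst_split_img by (subst sum.reindex[OF inj_split]) (simp add: comp_def)
  also have "\<dots> = (\<Sum>ys\<in>Lst M a. \<Sum>n=0..M. \<Sum>zs\<in>Lst M c. f (ys @ n # zs))"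
    by (simp add: sum.cartesian_product')
  finally show ?thesis .
qed

lemma sum_Lst_Cons:
  "(\<Sum>xs\<in>Lst M (Suc c). f xs) = (\<Sum>n=0..M. \<Sum>zs\<in>Lst M c. f (n # zs))"
  using sum_Lst_split[where a=0 and c=c and M=M and f=f] by simp

lemma sum_Lst_snoc:
  "(\<Sum>xs\<in>Lst M (Suc a). f xs) = (\<Sum>ys\<in>Lst M a. \<Sum>n=0..M. f (ys @ [n]))"
  using sum_Lst_split[where a=a and c=0 and M=M and f=f] by simp

definition wt :: "nat list \<Rightarrow> real" where "wt xs = prod_list (map bb xs)"

lemma wt_simps [simp]: "wt [] = 1" "wt (n # xs) = bb n * wt xs" "wt (xs @ ys) = wt xs * wt ys"
  by (simp_all add: wt_def)

definition NegC :: "nat list \<Rightarrow> bool" where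
  "NegC ys = (\<forall>j. 1 \<le> j \<and> j \<le> length ys \<longrightarrow> sum_list (take j ys) < j)"

definition PosC :: "nat \<Rightarrow> nat list \<Rightarrow> bool" where
  "PosC h zs = (h + sum_list zs = length zs \<and> (\<forall>j. j \<le> length zs \<longrightarrow> j \<le> h + sum_list (take j zs)))"

lemma NegC_Nil [simp]: "NegC []" by (simp add: NegC_def)

lemma NegC_len: "NegC ys \<Longrightarrow> sum_list ys \<le> length ys"
proof (cases "ys = []")
  case False
  assume "NegC ys"
  have "1 \<le> length ys" using False by (cases ys) auto
  then have "sum_list (take (length ys) ys) < length ys"
    using \<open>NegC ys\<close>[unfolded NegC_def, rule_format, of "length ys"] by simp
  then show ?thesis by simp
qed simp

lemma NegC_snoc: "NegC (ys @ [n]) \<longleftrightarrow> NegC ys \<and> sum_list ys + n < Suc (length ys)"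
proof
  assume H: "NegC (ys @ [n])"
  have "sum_list (take (length (ys @ [n])) (ys @ [n])) < length (ys @ [n])"
    using H[unfolded NegC_def, rule_format, of "length (ys @ [n])"] by simp
  then have 1: "sum_list ys + n < Suc (length ys)" by simp
  have 2: "NegC ys" unfolding NegC_def
  proof (intro allI impI)
    fix j assume j: "1 \<le> j \<and> j \<le> length ys"
    then have "sum_list (take j (ys @ [n])) < j" using H[unfolded NegC_def, rule_format, of j] by simp
    moreover have "take j (ys @ [n]) = take j ys" using j by simp
    ultimately show "sum_list (take j ys) < j" by simp
  qed
  show "NegC ys \<and> sum_list ys + n < Suc (length ys)" using 1 2 by simp
next
  assume H: "NegC ys \<and> sum_list ys + n < Suc (length ys)"
  show "NegC (ys @ [n])" unfolding NegC_def
  proof (intro allI impI)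
    fix j assume j: "1 \<le> j \<and> j \<le> length (ys @ [n])"
    show "sum_list (take j (ys @ [n])) < j"
    proof (cases "j \<le> length ys")
      case True
      then show ?thesis using H j unfolding NegC_def by simp
    next
      case False
      then have "j = Suc (length ys)" using j by simp
      then show ?thesis using H by simp
    qed
  qed
qed

lemma PosC_Nil [simp]: "PosC h [] \<longleftrightarrow> h = 0" by (simp add: PosC_def)

lemma PosC_Cons: "PosC h (n # zs) \<longleftrightarrow> 1 \<le> h + n \<and> PosC (h + n - 1) zs"
proof
  assume H: "PosC h (n # zs)"
  have tot: "h + n + sum_list zs = Suc (length zs)" using H by (simp add: PosC_def)
  have "1 \<le> h + sum_list (take 1 (n # zs))" using H[unfolded PosC_def, THEN conjunct2, rule_format, of 1] by simp
  then have h1: "1 \<le> h + n" by simp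
  have "PosC (h + n - 1) zs" unfolding PosC_def
  proof (intro conjI allI impI)
    show "h + n - 1 + sum_list zs = length zs" using tot h1 by simp
    fix j assume j: "j \<le> length zs"
    have "Suc j \<le> h + sum_list (take (Suc j) (n # zs))" using H[unfolded PosC_def, THEN conjunct2, rule_format, of "Suc j"] j by simp
    then show "j \<le> h + n - 1 + sum_list (take j zs)" using h1 by simp
  qed
  then show "1 \<le> h + n \<and> PosC (h + n - 1) zs" using h1 by simp
next
  assume H: "1 \<le> h + n \<and> PosC (h + n - 1) zs"
  show "PosC h (n # zs)" unfolding PosC_def
  proof (intro conjI allI impI)
    have e: "h + n - 1 + sum_list zs = length zs" using H unfolding PosC_def by blast
    have h1: "1 \<le> h + n" using H by blast
    show "h + sum_list (n # zs) = length (n # zs)" using e h1 by simp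
    fix j assume j: "j \<le> length (n # zs)"
    show "j \<le> h + sum_list (take j (n # zs))"
    proof (cases j)
      case (Suc j')
      then have "j' \<le> length zs" using j by simp
      then have "j' \<le> h + n - 1 + sum_list (take j' zs)"
        using H[THEN conjunct2, unfolded PosC_def, THEN conjunct2, rule_format, of j'] by simp
      then show ?thesis using Suc conjunct1[OF H] by simp
    qed simp
  qed
qed

definition Cond :: "nat \<Rightarrow> nat \<Rightarrow> nat list \<Rightarrow> bool" where
  "Cond i r xs = (sum_list xs = r \<and> (\<forall>j. 1 \<le> j \<and> j < i \<longrightarrow> sum_list (take j xs) < j)
      \<and> (\<forall>j. i \<le> j \<and> j < r \<longrightarrow> j \<le> sum_list (take j xs)))"

lemma take_sum_split: "sum_list (take j (ys @ n # zs)) =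
  (if j \<le> length ys then sum_list (take j ys) else sum_list ys + n + sum_list (take (j - Suc (length ys)) zs))"
proof (cases "j \<le> length ys")
  case False
  then obtain k where k: "j = Suc (length ys) + k" by (metis add_Suc le_Suc_ex not_less_eq_eq)
  then show ?thesis by (simp add: add.assoc)
qed simp

lemma Cond_split:
  assumes ly: "length ys = i - 1" and lz: "length zs = r - i" and i1: "1 \<le> i" and ir: "i \<le> r"
  shows "Cond i r (ys @ n # zs) \<longleftrightarrow> NegC ys \<and> i \<le> sum_list ys + n \<and> PosC (sum_list ys + n - i) zs"
proof -
  define S where "S = sum_list ys + n"
  define xs where "xs = ys @ n # zs"
  have sl: "Suc (length ys) = i" using ly i1 by simp
  have ts: "\<And>j. sum_list (take j xs) =
     (if j \<le> length ys then sum_list (take j ys) else S + sum_list (take (j - i) zs))"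
    unfolding xs_def by (simp only: take_sum_split sl S_def)
  have tot: "sum_list xs = S + sum_list zs" by (simp add: S_def xs_def)
  show ?thesis unfolding S_def[symmetric] xs_def[symmetric]
  proof
    assume C: "Cond i r xs"
    have C1: "sum_list xs = r" using C unfolding Cond_def by blast
    have C2: "\<And>j. 1 \<le> j \<Longrightarrow> j < i \<Longrightarrow> sum_list (take j xs) < j" using C unfolding Cond_def by blast
    have C3: "\<And>j. i \<le> j \<Longrightarrow> j < r \<Longrightarrow> j \<le> sum_list (take j xs)" using C unfolding Cond_def by blast
    have T: "S + sum_list zs = r" using C1 tot by simp
    have N: "NegC ys" unfolding NegC_def
    proof (intro allI impI)
      fix j assume j: "1 \<le> j \<and> j \<le> length ys"
      then have "j < i" using sl by simp
      then have "sum_list (take j xs) < j" using C2 j by blast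
      then show "sum_list (take j ys) < j" using j unfolding ts by simp
    qed
    have iS: "i \<le> S"
    proof (cases "i < r")
      case True
      then have "i \<le> sum_list (take i xs)" using C3 by blast
      then show ?thesis unfolding ts using sl by simp
    next
      case False
      then have "zs = []" using lz ir by simp
      then show ?thesis using T False ir by simp
    qed
    have P: "PosC (S - i) zs" unfolding PosC_def
    proof (intro conjI allI impI)
      show "S - i + sum_list zs = length zs" using T iS lz by simp
      fix j assume j: "j \<le> length zs"
      show "j \<le> S - i + sum_list (take j zs)"
      proof (cases "j < length zs")
        case True
        then have "i + j < r" using lz by simp
        then have "i + j \<le> sum_list (take (i + j) xs)" using C3 by simp
        then show ?thesis unfolding ts using sl iS by simp
      next
        case False
        then have "j = length zs" using j by simp
        then show ?thesis using T iS lz by simp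
      qed
    qed
    show "NegC ys \<and> i \<le> S \<and> PosC (S - i) zs" using N iS P by simp
  next
    assume H: "NegC ys \<and> i \<le> S \<and> PosC (S - i) zs"
    have e: "S - i + sum_list zs = length zs" using H unfolding PosC_def by blast
    have iS: "i \<le> S" using H by blast
    have T: "S + sum_list zs = r" using e iS lz ir by linarith
    show "Cond i r xs" unfolding Cond_def
    proof (intro conjI allI impI)
      show "sum_list xs = r" using T tot by simp
      fix j assume j: "1 \<le> j \<and> j < i"
      then have jl: "j \<le> length ys" using sl by simp
      then have "sum_list (take j ys) < j" using H j unfolding NegC_def by blast
      then show "sum_list (take j xs) < j" unfolding ts using jl by simp
    next
      fix j assume j: "i \<le> j \<and> j < r"
      then have "j - i \<le> length zs" using lz by arith
      then have "j - i \<le> S - i + sum_list (take (j - i) zs)" using H unfolding PosC_def by blast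
      moreover have "\<not> j \<le> length ys" using j sl by simp
      moreover have "sum_list (take j xs) = S + sum_list (take (j - i) zs)"
        using ts[of j] \<open>\<not> j \<le> length ys\<close> by simp
      ultimately show "j \<le> sum_list (take j xs)" using iS j by linarith
    qed
  qed
qed



definition NS :: "nat \<Rightarrow> nat \<Rightarrow> nat \<Rightarrow> real" where
  "NS M L s = (\<Sum>ys\<in>Lst M L. if NegC ys \<and> sum_list ys = s then wt ys else 0)"
definition PS :: "nat \<Rightarrow> nat \<Rightarrow> nat \<Rightarrow> real" where
  "PS M L h = (\<Sum>zs\<in>Lst M L. if PosC h zs then wt zs else 0)"

lemma PS_rec: "PS M (Suc L) h = (\<Sum>n=0..M. bb n * (if 1 \<le> h + n then PS M L (h + n - 1) else 0))"
  unfolding PS_def sum_Lst_Cons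
proof (rule sum.cong[OF refl])
  fix n
  show "(\<Sum>zs\<in>Lst M L. if PosC h (n # zs) then wt (n # zs) else 0) =
         bb n * (if 1 \<le> h + n then \<Sum>zs\<in>Lst M L. if PosC (h + n - 1) zs then wt zs else 0 else 0)"
  proof (cases "1 \<le> h + n")
    case True
    have "(\<Sum>zs\<in>Lst M L. if PosC h (n # zs) then wt (n # zs) else 0) =
       (\<Sum>zs\<in>Lst M L. bb n * (if PosC (h + n - 1) zs then wt zs else 0))"
      using True by (intro sum.cong refl) (simp add: PosC_Cons)
    then show ?thesis using True by (simp add: sum_distrib_left)
  next
    case False
    then show ?thesis by (simp add: PosC_Cons)
  qed
qed

lemma PS_be: "L \<le> M \<Longrightarrow> PS M L h = be L h"
proof (induction L arbitrary: h)
  case 0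
  have "PS M 0 h = (if h = 0 then 1 else 0)" unfolding PS_def by simp
  moreover have "be 0 h = (if h = 0 then 1 else 0)"
    by (cases h) (simp_all add: be_def fps_power_zeroth Dg_def)
  ultimately show ?case by simp
next
  case (Suc L)
  have "PS M (Suc L) h = (\<Sum>n=0..M. bb n * (if 1 \<le> h + n then PS M L (h + n - 1) else 0))"
    by (rule PS_rec)
  also have "\<dots> = (\<Sum>n=0..M. bb n * (if 1 \<le> h + n then be L (h + n - 1) else 0))"
    using Suc by (simp cong: if_cong)
  also have "\<dots> = be (Suc L) h" using Suc.prems by (simp add: be_rec)
  finally show ?case .
qed

lemma NS_rec: "NS M (Suc L) s = (if s < Suc L then (\<Sum>n=0..M. bb n * (if n \<le> s then NS M L (s - n) else 0)) else 0)"
proof -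
  have "NS M (Suc L) s = (\<Sum>ys\<in>Lst M L. \<Sum>n=0..M. if NegC (ys @ [n]) \<and> sum_list (ys @ [n]) = s then wt (ys @ [n]) else 0)"
    unfolding NS_def sum_Lst_snoc ..
  also have "\<dots> = (\<Sum>ys\<in>Lst M L. \<Sum>n=0..M. if s < Suc L \<and> n \<le> s then bb n * (if NegC ys \<and> sum_list ys = s - n then wt ys else 0) else 0)"
  proof (intro sum.cong refl)
    fix ys n assume ys: "ys \<in> Lst M L"
    then have l: "length ys = L" by (simp add: Lst_def)
    show "(if NegC (ys @ [n]) \<and> sum_list (ys @ [n]) = s then wt (ys @ [n]) else 0) =
      (if s < Suc L \<and> n \<le> s then bb n * (if NegC ys \<and> sum_list ys = s - n then wt ys else 0) else 0)"
      using l by (auto simp: NegC_snoc mult.commute)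
  qed
  also have "\<dots> = (\<Sum>n=0..M. \<Sum>ys\<in>Lst M L. if s < Suc L \<and> n \<le> s then bb n * (if NegC ys \<and> sum_list ys = s - n then wt ys else 0) else 0)"
    by (rule sum.swap)
  also have "\<dots> = (if s < Suc L then (\<Sum>n=0..M. bb n * (if n \<le> s then NS M L (s - n) else 0)) else 0)"
  proof (cases "s < Suc L")
    case True
    show ?thesis unfolding NS_def
    proof (simp only: True if_True, rule sum.cong[OF refl])
      fix n
      show "(\<Sum>ys\<in>Lst M L. if True \<and> n \<le> s then bb n * (if NegC ys \<and> sum_list ys = s - n then wt ys else 0) else 0) =
         bb n * (if n \<le> s then \<Sum>ys\<in>Lst M L. if NegC ys \<and> sum_list ys = s - n then wt ys else 0 else 0)"
        by (cases "n \<le> s") (simp_all add: sum_distrib_left)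
    qed
  qed simp
  finally show ?thesis .
qed

lemma NS_A: "L \<le> M \<Longrightarrow> NS M L s = A L s"
proof (induction L arbitrary: s)
  case 0
  show ?case by (simp add: NS_def A_def al_def)
next
  case (Suc L)
  have "NS M (Suc L) s = (if s < Suc L then (\<Sum>n=0..M. bb n * (if n \<le> s then NS M L (s - n) else 0)) else 0)"
    by (rule NS_rec)
  also have "\<dots> = (if s < Suc L then (\<Sum>n=0..M. bb n * (if n \<le> s then A L (s - n) else 0)) else 0)"
    using Suc by (simp cong: if_cong)
  also have "\<dots> = A (Suc L) s" using Suc.prems by (simp add: al_rec)
  finally show ?case .
qed

lemma if_mult0: "(if c then a else 0) * (g::real) = (if c then a * g else 0)" by simp

lemma group_sum:
  fixes w :: "'a \<Rightarrow> real" and G :: "nat \<Rightarrow> real"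
  assumes fin: "finite X" and bd: "\<And>x. x \<in> X \<Longrightarrow> P x \<Longrightarrow> h x \<le> K"
  shows "(\<Sum>x\<in>X. if P x then w x * G (h x) else 0) = (\<Sum>s=0..K. (\<Sum>x\<in>X. if P x \<and> h x = s then w x else 0) * G s)"
proof -
  have "(\<Sum>s=0..K. (\<Sum>x\<in>X. if P x \<and> h x = s then w x else 0) * G s) =
      (\<Sum>s=0..K. \<Sum>x\<in>X. if P x \<and> h x = s then w x * G s else 0)"
    by (simp add: sum_distrib_right if_mult0)
  also have "\<dots> = (\<Sum>x\<in>X. \<Sum>s=0..K. if P x \<and> h x = s then w x * G s else 0)" by (rule sum.swap)
  also have "\<dots> = (\<Sum>x\<in>X. if P x then w x * G (h x) else 0)"
  proof (rule sum.cong[OF refl])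
    fix x assume x: "x \<in> X"
    show "(\<Sum>s=0..K. if P x \<and> h x = s then w x * G s else 0) = (if P x then w x * G (h x) else 0)"
    proof (cases "P x")
      case True
      have "(\<Sum>s=0..K. if P x \<and> h x = s then w x * G s else 0) = (\<Sum>s=0..K. if h x = s then w x * G s else 0)"
        using True by simp
      also have "\<dots> = w x * G (h x)" using bd[OF x True] by (simp add: sum.delta)
      finally show ?thesis using True by simp
    qed simp
  qed
  finally show ?thesis by simp
qed

lemma comb_formula:
  assumes i1: "1 \<le> i" and ir: "i \<le> r"
  shows "(\<Sum>xs\<in>Lst r r. if Cond i r xs then wt xs else 0) =
    (\<Sum>s=0..i-1. A (i-1) s * (\<Sum>n=0..r. bb n * (if i \<le> s + n then be (r-i) (s+n-i) else 0)))"
proof -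
  define G where "G s = (\<Sum>n=0..r. bb n * (if i \<le> s + n then be (r-i) (s+n-i) else 0))" for s
  have rr: "r = (i - 1) + Suc (r - i)" using i1 ir by simp
  have "(\<Sum>xs\<in>Lst r r. if Cond i r xs then wt xs else 0) =
      (\<Sum>xs\<in>Lst r ((i - 1) + Suc (r - i)). if Cond i r xs then wt xs else 0)"
    using arg_cong[OF rr, of "Lst r"] by simp
  also have "\<dots> = (\<Sum>ys\<in>Lst r (i-1). \<Sum>n=0..r. \<Sum>zs\<in>Lst r (r-i).
        if Cond i r (ys @ n # zs) then wt (ys @ n # zs) else 0)"
    by (rule sum_Lst_split)
  also have "\<dots> = (\<Sum>ys\<in>Lst r (i-1). \<Sum>n=0..r. \<Sum>zs\<in>Lst r (r-i).
        if NegC ys then wt ys * (if i \<le> sum_list ys + n then bb n * (if PosC (sum_list ys + n - i) zs then wt zs else 0) else 0) else 0)"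
  proof (intro sum.cong refl)
    fix ys n zs assume ys: "ys \<in> Lst r (i-1)" and zs: "zs \<in> Lst r (r-i)"
    have c: "Cond i r (ys @ n # zs) \<longleftrightarrow> NegC ys \<and> i \<le> sum_list ys + n \<and> PosC (sum_list ys + n - i) zs"
      using ys zs i1 ir by (intro Cond_split) (auto simp: Lst_def)
    show "(if Cond i r (ys @ n # zs) then wt (ys @ n # zs) else 0) =
      (if NegC ys then wt ys * (if i \<le> sum_list ys + n then bb n * (if PosC (sum_list ys + n - i) zs then wt zs else 0) else 0) else 0)"
      unfolding c by (simp add: mult.assoc)
  qed
  also have "\<dots> = (\<Sum>ys\<in>Lst r (i-1). if NegC ys then wt ys * G (sum_list ys) else 0)"
  proof (rule sum.cong[OF refl])
    fix ys assume ys: "ys \<in> Lst r (i-1)"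
    show "(\<Sum>n=0..r. \<Sum>zs\<in>Lst r (r-i).
        if NegC ys then wt ys * (if i \<le> sum_list ys + n then bb n * (if PosC (sum_list ys + n - i) zs then wt zs else 0) else 0) else 0)
      = (if NegC ys then wt ys * G (sum_list ys) else 0)"
    proof (cases "NegC ys")
      case True
      have "(\<Sum>n=0..r. \<Sum>zs\<in>Lst r (r-i).
          wt ys * (if i \<le> sum_list ys + n then bb n * (if PosC (sum_list ys + n - i) zs then wt zs else 0) else 0))
        = wt ys * (\<Sum>n=0..r. bb n * (if i \<le> sum_list ys + n then PS r (r-i) (sum_list ys + n - i) else 0))"
        unfolding PS_def sum_distrib_left
      proof (rule sum.cong[OF refl])
        fix n
        show "(\<Sum>zs\<in>Lst r (r-i). wt ys * (if i \<le> sum_list ys + n then bb n * (if PosC (sum_list ys + n - i) zs then wt zs else 0) else 0)) =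
          wt ys * (bb n * (if i \<le> sum_list ys + n then \<Sum>zs\<in>Lst r (r-i). if PosC (sum_list ys + n - i) zs then wt zs else 0 else 0))"
          by (cases "i \<le> sum_list ys + n") (simp_all add: sum_distrib_left)
      qed
      also have "\<dots> = wt ys * G (sum_list ys)"
        unfolding G_def using PS_be[of "r - i" r] by (simp cong: if_cong)
      finally show ?thesis using True by simp
    qed simp
  qed
  also have "\<dots> = (\<Sum>s=0..i-1. NS r (i-1) s * G s)"
    unfolding NS_def
  proof (rule group_sum)
    fix ys assume "ys \<in> Lst r (i-1)" "NegC ys"
    then show "sum_list ys \<le> i - 1" using NegC_len[of ys] by (simp add: Lst_def)
  qed simp
  also have "\<dots> = (\<Sum>s=0..i-1. A (i-1) s * G s)"
    using NS_A[of "i - 1" r] ir by simp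
  finally show ?thesis unfolding G_def .
qed



lemma sum_upt_eq: "sum_list (map n [1..<Suc j]) = (\<Sum>l=1..j. n l)"
proof -
  have "sum_list (map n [1..<Suc j]) = sum n (set [1..<Suc j])"
    by (rule interv_sum_list_conv_sum_set_nat)
  also have "set [1..<Suc j] = {1..j}" by auto
  finally show ?thesis .
qed

lemma prefix_eq: "j \<le> r \<Longrightarrow> sum_list (take j (map n [1..<Suc r])) = (\<Sum>l=1..j. n l)"
proof -
  assume "j \<le> r"
  then have "take j (map n [1..<Suc r]) = map n [1..<Suc j]"
    by (simp add: take_map plus_1_eq_Suc del: upt_Suc)
  then show ?thesis by (simp only: sum_upt_eq)
qed

lemma suffix_eq: fixes n :: "nat \<Rightarrow> nat" shows "j \<le> r \<Longrightarrow> (\<Sum>l=j+1..r. n l) = (\<Sum>l=1..r. n l) - (\<Sum>l=1..j. (n l :: nat))"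
proof -
  assume jr: "j \<le> r"
  have "(\<Sum>l=1..j + (r - j). n l) = (\<Sum>l=1..j. n l) + (\<Sum>l=j+1..j + (r - j). n l)"
    by (rule sum.ub_add_nat) simp
  then show ?thesis using jr by simp
qed

lemma Sidx_iff:
  assumes supp: "\<forall>k. k \<notin> {1..r} \<longrightarrow> n k = 0" and ir: "i \<le> r"
  shows "n \<in> Sidx i r \<longleftrightarrow> Cond i r (map n [1..<Suc r])"
proof -
  define xs where "xs = map n [1..<Suc r]"
  have P: "\<And>j. j \<le> r \<Longrightarrow> sum_list (take j xs) = (\<Sum>l=1..j. n l)" unfolding xs_def by (rule prefix_eq)
  have T: "sum_list xs = (\<Sum>l=1..r. n l)" using P[of r] by (simp add: xs_def)
  have Pl: "\<And>j. j \<le> r \<Longrightarrow> (\<Sum>l=1..j. n l) \<le> (\<Sum>l=1..r. n l)"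
    by (rule sum_mono2) auto
  show ?thesis unfolding xs_def[symmetric]
  proof
    assume S: "n \<in> Sidx i r"
    have S1: "(\<Sum>j=1..r. n j) = r" using S by (simp add: Sidx_def)
    have S2: "\<And>j. 1 \<le> j \<Longrightarrow> j < i \<Longrightarrow> (\<Sum>l=1..j. n l) < j" using S unfolding Sidx_def by blast
    have S3: "\<And>j. i \<le> j \<Longrightarrow> j < r \<Longrightarrow> (\<Sum>l=j+1..r. n l) \<le> r - j" using S unfolding Sidx_def by blast
    show "Cond i r xs" unfolding Cond_def
    proof (intro conjI allI impI)
      show "sum_list xs = r" using T S1 by simp
      fix j assume j: "1 \<le> j \<and> j < i"
      then show "sum_list (take j xs) < j" using P[of j] S2[of j] ir by simp
    next
      fix j assume j: "i \<le> j \<and> j < r"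
      then have "(\<Sum>l=j+1..r. n l) \<le> r - j" using S3 by blast
      then have "r - (\<Sum>l=1..j. n l) \<le> r - j" using suffix_eq[of j r n] j S1 by simp
      moreover have "(\<Sum>l=1..j. n l) \<le> r" using Pl[of j] j S1 by simp
      ultimately have "j \<le> (\<Sum>l=1..j. n l)" using j by arith
      then show "j \<le> sum_list (take j xs)" using P[of j] j by simp
    qed
  next
    assume C: "Cond i r xs"
    have C1: "sum_list xs = r" using C unfolding Cond_def by blast
    have C2: "\<And>j. 1 \<le> j \<Longrightarrow> j < i \<Longrightarrow> sum_list (take j xs) < j" using C unfolding Cond_def by blast
    have C3: "\<And>j. i \<le> j \<Longrightarrow> j < r \<Longrightarrow> j \<le> sum_list (take j xs)" using C unfolding Cond_def by blast
    have S1: "(\<Sum>j=1..r. n j) = r" using T C1 by simp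
    show "n \<in> Sidx i r" unfolding Sidx_def
    proof (intro CollectI conjI allI impI)
      show "\<And>j. j \<notin> {1..r} \<Longrightarrow> n j = 0" using supp by blast
      show "(\<Sum>j=1..r. n j) = r" by (rule S1)
      fix j assume j: "1 \<le> j \<and> j < i"
      then show "(\<Sum>l=1..j. n l) < j" using P[of j] C2[of j] ir by simp
    next
      fix j assume j: "i \<le> j \<and> j < r"
      then have "j \<le> (\<Sum>l=1..j. n l)" using C3[of j] P[of j] by simp
      moreover have "(\<Sum>l=1..j. n l) \<le> r" using Pl[of j] j S1 by simp
      ultimately show "(\<Sum>l=j+1..r. n l) \<le> r - j" using suffix_eq[of j r n] j S1 by simp
    qed
  qed
qed

lemma Sidx_supp: "n \<in> Sidx i r \<Longrightarrow> \<forall>k. k \<notin> {1..r} \<longrightarrow> n k = 0"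
  by (simp add: Sidx_def)

lemma wt_map: "wt (map n [1..<Suc r]) = (\<Prod>j=1..r. bern (n j) / fact (n j))"
proof -
  have "wt (map n [1..<Suc r]) = (\<Prod>j\<in>set [1..<Suc r]. bb (n j))"
    by (simp add: wt_def prod.distinct_set_conv_list comp_def del: upt_Suc set_upt)
  also have "set [1..<Suc r] = {1..r}" by auto
  finally show ?thesis by (simp add: bern_eq bb_def)
qed

lemma Ccoef_comb:
  assumes i1: "1 \<le> i" and ir: "i \<le> r"
  shows "Ccoef i r = (-1) ^ r * (\<Sum>xs\<in>Lst r r. if Cond i r xs then wt xs else 0)"
proof -
  define bk where "bk xs = (\<lambda>k. if 1 \<le> k \<and> k \<le> r then xs ! (k - 1) else 0)" for xs :: "nat list"
  have "(\<Sum>xs\<in>Lst r r. if Cond i r xs then wt xs else 0) = (\<Sum>xs\<in>{xs\<in>Lst r r. Cond i r xs}. wt xs)"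
    by (simp add: sum.inter_filter)
  also have "\<dots> = (\<Sum>n\<in>Sidx i r. \<Prod>j=1..r. bern (n j) / fact (n j))"
  proof (rule sum.reindex_bij_witness[where i = "\<lambda>n. map n [1..<Suc r]" and j = bk])
    fix xs assume xs: "xs \<in> {xs\<in>Lst r r. Cond i r xs}"
    then have len: "length xs = r" by (simp add: Lst_def)
    show "map (bk xs) [1..<Suc r] = xs"
      by (rule nth_equalityI) (auto simp: len bk_def simp del: upt_Suc)
    have supp: "\<forall>k. k \<notin> {1..r} \<longrightarrow> bk xs k = 0" by (simp add: bk_def)
    show "bk xs \<in> Sidx i r"
      using xs Sidx_iff[OF supp ir] \<open>map (bk xs) [1..<Suc r] = xs\<close> by simp
    show "(\<Prod>j=1..r. bern (bk xs j) / fact (bk xs j)) = wt xs"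
      using wt_map[of "bk xs" r] \<open>map (bk xs) [1..<Suc r] = xs\<close> by simp
  next
    fix n assume n: "n \<in> Sidx i r"
    have supp: "\<forall>k. k \<notin> {1..r} \<longrightarrow> n k = 0" using Sidx_supp[OF n] .
    show "bk (map n [1..<Suc r]) = n"
    proof
      fix k show "bk (map n [1..<Suc r]) k = n k"
        using supp by (auto simp: bk_def simp del: upt_Suc)
    qed
    have C: "Cond i r (map n [1..<Suc r])" using n Sidx_iff[OF supp ir] by simp
    have "set (map n [1..<Suc r]) \<subseteq> {0..r}"
    proof
      fix x assume "x \<in> set (map n [1..<Suc r])"
      then obtain k where k0: "k \<in> set [1..<Suc r]" and x: "x = n k" by (auto simp del: upt_Suc set_upt)
      have k: "k \<in> {1..r}" using k0 by (auto simp del: upt_Suc)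
      have "n k \<le> (\<Sum>l=1..r. n l)" using k by (intro member_le_sum) auto
      also have "\<dots> = r" using n by (simp add: Sidx_def)
      finally show "x \<in> {0..r}" using x by simp
    qed
    then show "map n [1..<Suc r] \<in> {xs\<in>Lst r r. Cond i r xs}" using C by (simp add: Lst_def)
  qed
  finally show ?thesis by (simp add: Ccoef_def Cset_def)
qed



definition tau :: "nat \<Rightarrow> real fps" where "tau g = fps_shift g bernoulli_gf oo Lg"

definition kap :: "nat \<Rightarrow> real fps" where
  "kap p = fps_X * (Dg * (\<Sum>g=0..p. fps_const (al p g) * tau (Suc g)))"

lemma Dtau_nth: "(Dg * tau (Suc g)) $ q = (\<Sum>k=0..q. bb (k + g + 1) * be q k)"
proof -
  have "(Dg * tau (Suc g)) $ q = (tau (Suc g) * Dg) $ q" by (simp add: mult.commute)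
  also have "\<dots> = (\<Sum>k=0..q. (fps_shift (Suc g) bernoulli_gf) $ k * (Lg ^ k * Dg) $ q)"
    unfolding tau_def by (rule compose_mult_nth) simp
  also have "\<dots> = (\<Sum>k=0..q. bb (k + g + 1) * be q k)"
    by (simp add: bb_def be_def)
  finally show ?thesis .
qed

lemma kap_nth: "kap p $ Suc q = (\<Sum>g=0..p. al p g * (\<Sum>k=0..q. bb (k + g + 1) * be q k))"
proof -
  have "kap p $ Suc q = (Dg * (\<Sum>g=0..p. fps_const (al p g) * tau (Suc g))) $ q"
    by (simp add: kap_def)
  also have "\<dots> = (\<Sum>g=0..p. (fps_const (al p g) * (Dg * tau (Suc g))) $ q)"
    by (simp add: sum_distrib_left fps_sum_nth mult.left_commute)
  also have "\<dots> = (\<Sum>g=0..p. al p g * (\<Sum>k=0..q. bb (k + g + 1) * be q k))"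
    by (simp add: Dtau_nth)
  finally show ?thesis .
qed

lemma kap_nth0 [simp]: "kap p $ 0 = 0" by (simp add: kap_def)

lemma inner_eq:
  assumes "g + 1 + q \<le> r"
  shows "(\<Sum>n=0..r. bb n * (if g + 1 \<le> n then be q (n - g - 1) else 0)) = (\<Sum>k=0..q. bb (k + g + 1) * be q k)"
proof -
  have "(\<Sum>k=0..q. bb (k + g + 1) * be q k) = (\<Sum>k=0..q. (\<lambda>n. bb n * be q (n - g - 1)) (k + (g + 1)))"
    by simp
  also have "\<dots> = (\<Sum>n=0 + (g+1)..q + (g+1). bb n * be q (n - g - 1))"
    by (rule sum.shift_bounds_cl_nat_ivl[symmetric])
  also have "\<dots> = (\<Sum>n=0..r. bb n * (if g + 1 \<le> n then be q (n - g - 1) else 0))"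
  proof (rule sum.mono_neutral_cong_left)
    show "\<forall>i\<in>{0..r} - {0 + (g + 1)..q + (g + 1)}. bb i * (if g + 1 \<le> i then be q (i - g - 1) else 0) = 0"
      by (auto simp: be_zero)
  qed (use assms in auto)
  finally show ?thesis by simp
qed

lemma Ccoef_kap:
  assumes i1: "1 \<le> i" and ir: "i \<le> r"
  shows "Ccoef i r = (-1) ^ r * kap (i - 1) $ Suc (r - i)"
proof -
  define p where "p = i - 1"
  define q where "q = r - i"
  have ip: "i = p + 1" using i1 by (simp add: p_def)
  have rpq: "r = p + 1 + q" using ir i1 by (simp add: p_def q_def)
  define F where "F s = A p s * (\<Sum>n=0..r. bb n * (if i \<le> s + n then be (r-i) (s+n-i) else 0))" for s
  have "Ccoef i r = (-1) ^ r * (\<Sum>s=0..p. F s)"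
    using Ccoef_comb[OF i1 ir] comb_formula[OF i1 ir] by (simp add: F_def p_def)
  also have "(\<Sum>s=0..p. F s) = (\<Sum>g=0..p. F (p + 0 - g))"
    by (rule sum.atLeastAtMost_rev)
  also have "\<dots> = (\<Sum>g=0..p. al p g * (\<Sum>k=0..q. bb (k + g + 1) * be q k))"
  proof (rule sum.cong[OF refl])
    fix g assume g: "g \<in> {0..p}"
    have "F (p + 0 - g) = al p g * (\<Sum>n=0..r. bb n * (if g + 1 \<le> n then be q (n - g - 1) else 0))"
    proof -
      have "A p (p - g) = al p g" using g by (simp add: A_def)
      moreover have "(\<Sum>n=0..r. bb n * (if i \<le> (p - g) + n then be (r-i) ((p - g)+n-i) else 0)) =
          (\<Sum>n=0..r. bb n * (if g + 1 \<le> n then be q (n - g - 1) else 0))"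
        using g by (intro sum.cong refl) (auto simp: ip q_def)
      ultimately show ?thesis by (simp add: F_def)
    qed
    also have "\<dots> = al p g * (\<Sum>k=0..q. bb (k + g + 1) * be q k)"
      using g rpq by (subst inner_eq) auto
    finally show "F (p + 0 - g) = al p g * (\<Sum>k=0..q. bb (k + g + 1) * be q k)" .
  qed
  also have "\<dots> = kap p $ Suc q" by (simp add: kap_nth)
  finally show ?thesis by (simp add: p_def q_def)
qed



definition emb :: "real fps \<Rightarrow> real fps fps" where
  "emb f = Abs_fps (\<lambda>p. fps_const (f $ p))"

definition sw :: "real fps fps \<Rightarrow> real fps fps" where
  "sw Z = Abs_fps (\<lambda>a. Abs_fps (\<lambda>b. Z $ b $ a))"

lemma fps_const_sum: "fps_const (sum f S) = (\<Sum>x\<in>S. fps_const (f x))"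
  by (induct S rule: infinite_finite_induct) (simp_all del: fps_const_add add: fps_const_add[symmetric])

lemma emb_nth [simp]: "emb f $ p = fps_const (f $ p)" by (simp add: emb_def)

lemma emb_mult: "emb (f * g) = emb f * emb g"
  by (simp add: fps_eq_iff fps_mult_nth fps_const_sum)

lemma emb_diff: "emb (f - g) = emb f - emb g"
  by (simp add: fps_eq_iff)

lemma emb_one: "emb 1 = 1"
  by (simp add: fps_eq_iff)

lemma emb_X: "emb fps_X = fps_X"
  by (simp add: fps_eq_iff fps_X_def)

lemma sw_nth [simp]: "sw Z $ a $ b = Z $ b $ a" by (simp add: sw_def)

lemma sw_diff: "sw (Z - W) = sw Z - sw W" by (simp add: fps_eq_iff)
lemma sw_emb: "sw (emb f) = fps_const f" by (simp add: fps_eq_iff)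
lemma sw_const: "sw (fps_const f) = emb f" by (simp add: fps_eq_iff)

lemma sw_emb_mult: "sw (emb f * Z) = fps_const f * sw Z"
proof (rule fps_ext, rule fps_ext)
  fix a b
  have "sw (emb f * Z) $ a $ b = (\<Sum>k=0..b. fps_const (f $ k) * Z $ (b - k)) $ a"
    by (simp only: sw_nth fps_mult_nth emb_nth)
  also have "\<dots> = (\<Sum>k=0..b. f $ k * Z $ (b - k) $ a)"
    by (simp add: fps_sum_nth)
  also have "\<dots> = (fps_const f * sw Z) $ a $ b"
    by (simp only: fps_mult_left_const_nth) (simp only: fps_mult_nth sw_nth)
  finally show "sw (emb f * Z) $ a $ b = (fps_const f * sw Z) $ a $ b" .
qed

lemma sw_const_mult: "sw (fps_const f * Z) = emb f * sw Z"
proof (rule fps_ext, rule fps_ext)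
  fix a b
  have "sw (fps_const f * Z) $ a $ b = (\<Sum>k=0..a. f $ k * Z $ b $ (a - k))"
    by (simp only: sw_nth fps_mult_left_const_nth) (simp only: fps_mult_nth)
  also have "\<dots> = (\<Sum>k=0..a. fps_const (f $ k) * sw Z $ (a - k)) $ b"
    by (simp add: fps_sum_nth)
  also have "\<dots> = (emb f * sw Z) $ a $ b"
    by (simp only: fps_mult_nth emb_nth)
  finally show "sw (fps_const f * Z) $ a $ b = (emb f * sw Z) $ a $ b" .
qed

lemma sw_sw: "sw (sw Z) = Z" by (simp add: fps_eq_iff)

lemma shift_split: "fps_shift g (f::real fps) = fps_const (f $ g) + fps_X * fps_shift (Suc g) f"
proof (rule fps_ext)
  fix n show "fps_shift g f $ n = (fps_const (f $ g) + fps_X * fps_shift (Suc g) f) $ n"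
    by (cases n) simp_all
qed

lemma tau_rec: "tau g = fps_const (bb g) + Lg * tau (Suc g)"
proof -
  have "tau g = (fps_const (bernoulli_gf $ g) + fps_X * fps_shift (Suc g) bernoulli_gf) oo Lg"
    unfolding tau_def by (subst shift_split) simp
  also have "\<dots> = fps_const (bb g) + Lg * tau (Suc g)"
    by (simp add: fps_compose_add_distrib fps_compose_mult_distrib tau_def bb_def)
  finally show ?thesis .
qed

lemma tau0: "tau 0 = Dg" by (simp add: tau_def phi_Lg)

definition Eg :: "real fps" where "Eg = fps_X * tau 1"

lemma DE: "Dg * (1 - Eg) = 1"
proof -
  have "Dg = 1 + Lg * tau 1" using tau_rec[of 0] by (simp add: tau0)
  also have "\<dots> = 1 + Dg * Eg" by (simp add: Lg_eq Eg_def mult_ac)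
  finally have "Dg = 1 + Dg * Eg" .
  then show ?thesis by (simp add: algebra_simps)
qed

definition Sz :: "real fps fps" where
  "Sz = Abs_fps (\<lambda>p. \<Sum>g=0..p. fps_const (al p g) * tau (Suc g))"

definition Kz :: "real fps fps" where "Kz = Abs_fps kap"

lemma Kz_eq: "Kz = fps_const (fps_X * Dg) * Sz"
  by (simp add: fps_eq_iff Kz_def Sz_def kap_def mult.assoc)

lemma al_Suc: "al p (Suc g) = (\<Sum>k=0..p. Lg $ k * al (p - k) g)"
  by (simp add: al_def fps_mult_nth)

lemma Sz_ext: "p \<le> N \<Longrightarrow> Sz $ p = (\<Sum>g=0..N. fps_const (al p g) * tau (Suc g))"
  unfolding Sz_def by (simp, rule sum.mono_neutral_left) (auto simp: al_zero)

lemma Dg_nth_sum: "Dg $ p = (\<Sum>g=0..p. al p g * bb g)"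
  by (simp add: Dg_compose fps_compose_nth al_def bb_def mult.commute)

lemma core: "(emb Lg - fps_const Lg) * Sz = emb Dg - fps_const Dg"
proof (rule fps_ext)
  fix p
  have A1: "(emb Lg * Sz) $ p = (\<Sum>g=0..p. fps_const (al p (Suc g)) * tau (Suc g))"
  proof -
    have "(emb Lg * Sz) $ p = (\<Sum>k=0..p. fps_const (Lg $ k) * Sz $ (p - k))"
      by (simp add: fps_mult_nth)
    also have "\<dots> = (\<Sum>k=0..p. fps_const (Lg $ k) * (\<Sum>g=0..p. fps_const (al (p - k) g) * tau (Suc g)))"
      by (intro sum.cong refl) (simp add: Sz_ext)
    also have "\<dots> = (\<Sum>g=0..p. \<Sum>k=0..p. fps_const (Lg $ k * al (p - k) g) * tau (Suc g))"
      by (simp add: sum_distrib_left mult.assoc[symmetric]) (rule sum.swap)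
    also have "\<dots> = (\<Sum>g=0..p. fps_const (al p (Suc g)) * tau (Suc g))"
      by (simp add: al_Suc fps_const_sum sum_distrib_right)
    finally show ?thesis .
  qed
  have A2: "(fps_const Lg * Sz) $ p = (\<Sum>g=0..p. fps_const (al p g) * tau g) - (\<Sum>g=0..p. fps_const (al p g * bb g))"
  proof -
    have "(fps_const Lg * Sz) $ p = (\<Sum>g=0..p. fps_const (al p g) * (Lg * tau (Suc g)))"
      by (simp add: Sz_def sum_distrib_left mult.left_commute)
    also have "\<dots> = (\<Sum>g=0..p. fps_const (al p g) * tau g - fps_const (al p g * bb g))"
    proof (intro sum.cong refl)
      fix g show "fps_const (al p g) * (Lg * tau (Suc g)) = fps_const (al p g) * tau g - fps_const (al p g * bb g)"
        by (subst tau_rec[of g]) (simp add: algebra_simps)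
    qed
    finally show ?thesis by (simp add: sum_subtractf)
  qed
  have tel: "(\<Sum>g=0..p. fps_const (al p (Suc g)) * tau (Suc g) - fps_const (al p g) * tau g)
      = fps_const (al p (Suc p)) * tau (Suc p) - fps_const (al p 0) * tau 0"
    by (rule sum_Suc_diff) simp
  have "((emb Lg - fps_const Lg) * Sz) $ p = (emb Lg * Sz) $ p - (fps_const Lg * Sz) $ p"
    by (simp add: algebra_simps)
  also have "\<dots> = (\<Sum>g=0..p. fps_const (al p (Suc g)) * tau (Suc g) - fps_const (al p g) * tau g)
       + (\<Sum>g=0..p. fps_const (al p g * bb g))"
    unfolding A1 A2 by (simp add: sum_subtractf)
  also have "\<dots> = - (fps_const (al p 0) * Dg) + fps_const (Dg $ p)"
    unfolding tel by (simp add: al_zero tau0 Dg_nth_sum fps_const_sum)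
  also have "\<dots> = (emb Dg - fps_const Dg) $ p"
    by (simp add: al_def)
  finally show "((emb Lg - fps_const Lg) * Sz) $ p = (emb Dg - fps_const Dg) $ p" .
qed



lemma alg_id:
  fixes K T U Du Dt Eu Et :: "'a::comm_ring_1"
  assumes e1: "Du*Eu = Du - 1" and e2: "Dt*Et = Dt - 1" and c: "K*(U*Du - T*Dt) = T*Dt*(Du - Dt)"
  shows "Du*Dt*(T*K - U*K - T*(Eu*K) + U*(Et*K) + T*(Dt*Eu)) = Du*Dt*(T*(Dt - 1))"
proof -
  have "Du*Dt*(T*K - U*K - T*(Eu*K) + U*(Et*K) + T*(Dt*Eu))
      = K*(T*Du*Dt - U*Du*Dt) - T*Dt*K*(Du*Eu) + U*Du*K*(Dt*Et) + T*Dt*Dt*(Du*Eu)"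
    by (simp add: algebra_simps)
  also have "\<dots> = K*(T*Du*Dt - U*Du*Dt) - T*Dt*K*(Du - 1) + U*Du*K*(Dt - 1) + T*Dt*Dt*(Du - 1)"
    by (simp add: e1 e2)
  also have "\<dots> = - (K*(U*Du - T*Dt)) + T*Dt*Dt*(Du - 1)"
    by (simp add: algebra_simps)
  also have "\<dots> = - (T*Dt*(Du - Dt)) + T*Dt*Dt*(Du - 1)"
    by (simp add: c)
  also have "\<dots> = Du*Dt*(T*(Dt - 1))"
    by (simp add: algebra_simps)
  finally show ?thesis .
qed

lemma Eg0 [simp]: "Eg $ 0 = 0" by (simp add: Eg_def)

lemma emb_nz: "emb Dg \<noteq> 0"
proof
  assume "emb Dg = 0"
  then have "emb Dg $ 0 = 0" by simp
  then show False by (simp add: Dg_def)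
qed

lemma const_nz: "fps_const Dg \<noteq> 0"
proof
  assume "fps_const Dg = 0"
  then have "fps_const Dg $ 0 $ 0 = 0" by simp
  then show False by (simp add: Dg_def)
qed

lemma L_nz: "emb Lg - fps_const Lg \<noteq> 0"
proof
  assume "emb Lg - fps_const Lg = 0"
  then have "(emb Lg - fps_const Lg) $ 1 $ 0 = 0" by simp
  then show False by (simp add: Lg_def)
qed

lemma Lu_eq: "emb Lg = fps_X * emb Dg" by (simp add: Lg_eq emb_mult emb_X)
lemma Lt_eq: "fps_const Lg = fps_const fps_X * fps_const Dg" by (simp add: Lg_eq)

lemma DE': "Dg * Eg = Dg - 1" using DE by (simp add: algebra_simps)

lemma eu: "emb Dg * emb Eg = emb Dg - 1"
  by (simp add: emb_mult[symmetric] DE' emb_diff emb_one)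

lemma et: "fps_const Dg * fps_const Eg = fps_const Dg - 1"
proof -
  have "fps_const Dg * fps_const Eg = fps_const (Dg * Eg)" by simp
  also have "\<dots> = fps_const (Dg - 1)" by (simp add: DE')
  also have "\<dots> = fps_const Dg - fps_const 1" by (simp only: fps_const_sub)
  finally show ?thesis by simp
qed

lemma kcore: "Kz * (emb Lg - fps_const Lg) = fps_const fps_X * fps_const Dg * (emb Dg - fps_const Dg)"
proof -
  have "Kz * (emb Lg - fps_const Lg) = fps_const (fps_X * Dg) * ((emb Lg - fps_const Lg) * Sz)"
    by (simp add: Kz_eq mult_ac)
  also have "\<dots> = fps_const fps_X * fps_const Dg * (emb Dg - fps_const Dg)"
    by (simp add: core)
  finally show ?thesis .
qed

lemma Omega:
  "fps_const fps_X * Kz - fps_X * Kz - fps_const fps_X * (emb Eg * Kz) + fps_X * (fps_const Eg * Kz)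
     + fps_const fps_X * (fps_const Dg * emb Eg) = fps_const fps_X * (fps_const Dg - 1)"
proof -
  have c: "Kz * (fps_X * emb Dg - fps_const fps_X * fps_const Dg) = fps_const fps_X * fps_const Dg * (emb Dg - fps_const Dg)"
    using kcore by (simp add: Lu_eq Lt_eq)
  have "emb Dg * fps_const Dg * (fps_const fps_X * Kz - fps_X * Kz - fps_const fps_X * (emb Eg * Kz) + fps_X * (fps_const Eg * Kz)
     + fps_const fps_X * (fps_const Dg * emb Eg)) = emb Dg * fps_const Dg * (fps_const fps_X * (fps_const Dg - 1))"
    by (rule alg_id[OF eu et c])
  moreover have "emb Dg * fps_const Dg \<noteq> 0" using emb_nz const_nz by simp
  ultimately show ?thesis by simp
qed

lemma Kz_nth [simp]: "Kz $ p = kap p" by (simp add: Kz_def)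

lemma coef_identity:
  assumes p1: "1 \<le> p"
  shows "kap p $ q - kap (p - 1) $ Suc q - (\<Sum>j=0..p. Eg $ j * kap (p - j) $ q)
     + (\<Sum>j=0..Suc q. Eg $ j * kap (p - 1) $ (Suc q - j)) + Dg $ q * Eg $ p = 0"
proof -
  define LHS where "LHS = fps_const fps_X * Kz - fps_X * Kz - fps_const fps_X * (emb Eg * Kz) + fps_X * (fps_const Eg * Kz)
     + fps_const fps_X * (fps_const Dg * emb Eg)"
  have z: "LHS $ p $ Suc q = 0" using p1 unfolding LHS_def Omega by simp
  have t1: "(fps_const fps_X * Kz) $ p $ Suc q = kap p $ q" by simp
  have t2: "(fps_X * Kz) $ p $ Suc q = kap (p - 1) $ Suc q" using p1 by simp
  have t3: "(fps_const fps_X * (emb Eg * Kz)) $ p $ Suc q = (\<Sum>j=0..p. Eg $ j * kap (p - j) $ q)"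
    by (simp only: fps_mult_left_const_nth fps_X_mult_nth) (simp add: fps_mult_nth[of "emb Eg"] fps_sum_nth)
  have t4: "(fps_X * (fps_const Eg * Kz)) $ p $ Suc q = (\<Sum>j=0..Suc q. Eg $ j * kap (p - 1) $ (Suc q - j))"
    using p1 by (simp only: fps_X_mult_nth fps_mult_left_const_nth) (simp add: fps_mult_nth[of Eg])
  have t5: "(fps_const fps_X * (fps_const Dg * emb Eg)) $ p $ Suc q = Dg $ q * Eg $ p"
    by simp
  show ?thesis using z unfolding LHS_def by (simp only: fps_add_nth fps_sub_nth t1 t2 t3 t4 t5)
qed



lemma alg2:
  fixes K Z T U Du Dt :: "'a::comm_ring_1"
  assumes c: "K*(U*Du - T*Dt) = T*Dt*(Du - Dt)" and s: "(T*Dt - U*Du)*Z = U*Du*(Dt - Du)"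
  shows "(K - Z - (Dt - Du))*(U*Du - T*Dt) = 0"
proof -
  have "(K - Z - (Dt - Du))*(U*Du - T*Dt) = K*(U*Du - T*Dt) + (T*Dt - U*Du)*Z - (Dt - Du)*(U*Du - T*Dt)"
    by (simp add: algebra_simps)
  also have "\<dots> = T*Dt*(Du - Dt) + U*Du*(Dt - Du) - (Dt - Du)*(U*Du - T*Dt)"
    by (simp add: c s)
  also have "\<dots> = 0" by (simp add: algebra_simps)
  finally show ?thesis .
qed

lemma sym_rel: "Kz - sw Kz = fps_const Dg - emb Dg"
proof -
  have "sw (Kz * (emb Lg - fps_const Lg)) = sw (fps_const (fps_X * Dg) * (emb Dg - fps_const Dg))"
    using kcore by simp
  moreover have "Kz * (emb Lg - fps_const Lg) = emb Lg * Kz - fps_const Lg * Kz" by (simp add: algebra_simps)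
  ultimately have "fps_const Lg * sw Kz - emb Lg * sw Kz = emb (fps_X * Dg) * (fps_const Dg - emb Dg)"
    by (simp only: sw_diff sw_emb_mult sw_const_mult sw_emb sw_const)
  then have s: "(fps_const fps_X * fps_const Dg - fps_X * emb Dg) * sw Kz = fps_X * emb Dg * (fps_const Dg - emb Dg)"
    by (simp add: Lu_eq Lt_eq emb_mult emb_X algebra_simps)
  have c: "Kz * (fps_X * emb Dg - fps_const fps_X * fps_const Dg) = fps_const fps_X * fps_const Dg * (emb Dg - fps_const Dg)"
    using kcore by (simp add: Lu_eq Lt_eq)
  have "(Kz - sw Kz - (fps_const Dg - emb Dg)) * (fps_X * emb Dg - fps_const fps_X * fps_const Dg) = 0"
    by (rule alg2[OF c s])
  moreover have "fps_X * emb Dg - fps_const fps_X * fps_const Dg \<noteq> 0"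
    using L_nz by (simp add: Lu_eq Lt_eq)
  ultimately show ?thesis by simp
qed

lemma kap_sym: "kap a $ b = kap b $ a + (if a = 0 then Dg $ b else 0) - (if b = 0 then Dg $ a else 0)"
proof -
  have "(Kz - sw Kz) $ a $ b = (fps_const Dg - emb Dg) $ a $ b" by (simp add: sym_rel)
  then show ?thesis by (cases "a = 0"; cases "b = 0") (simp_all add: algebra_simps)
qed

lemma be00 [simp]: "be 0 0 = 1" by (simp add: be_def Dg_def)

lemma E_kap: "1 \<le> m \<Longrightarrow> kap (m - 1) $ 1 = Eg $ m"
proof -
  assume m: "1 \<le> m"
  have "kap (m - 1) $ Suc 0 = (\<Sum>g=0..m-1. al (m-1) g * bb (g + 1))"
    by (simp add: kap_nth)
  also have "\<dots> = tau 1 $ (m - 1)"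
    by (simp add: tau_def fps_compose_nth bb_def al_def mult.commute)
  also have "\<dots> = Eg $ m" using m by (simp add: Eg_def)
  finally show ?thesis by simp
qed

lemma C_eq: "1 \<le> a \<Longrightarrow> a \<le> b \<Longrightarrow> Ccoef a b = (-1) ^ b * kap (a - 1) $ Suc (b - a)"
  by (rule Ccoef_kap)

lemma C_diag: "1 \<le> m \<Longrightarrow> Ccoef m m = (-1) ^ m * Eg $ m"
  using C_eq[of m m] E_kap[of m] by simp

lemma rev_sum:
  fixes a b r :: nat
  assumes ar: "a \<le> r" and br: "b \<le> r"
  shows "(\<Sum>k=a..b. f k) = (\<Sum>j=r-b..r-a. f (r - j))"
proof (rule sum.reindex_bij_witness[where i = "\<lambda>j. r - j" and j = "\<lambda>k. r - k"])
  fix x assume x: "x \<in> {a..b}"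
  then have "x \<le> r" using br by simp
  then show "r - (r - x) = x" and "f (r - (r - x)) = f x" by simp_all
  show "r - x \<in> {r-b..r-a}" using x br by auto
next
  fix y assume y: "y \<in> {r-b..r-a}"
  then show "r - (r - y) = y" using ar by auto
  show "r - y \<in> {a..b}" using y ar br by auto
qed

lemma sum_ends: fixes n :: nat and f :: "nat \<Rightarrow> real" shows "1 \<le> n \<Longrightarrow> (\<Sum>j=0..n. f j) = f 0 + (\<Sum>j=1..n-1. f j) + (f n :: real)"
proof -
  assume "1 \<le> n"
  then obtain m where n: "n = Suc m" by (cases n) auto
  have "(\<Sum>j=0..Suc m. f j) = (\<Sum>j=0..m. f j) + f (Suc m)" by (rule sum.atLeast0_atMost_Suc)
  also have "(\<Sum>j=0..m. f j) = f 0 + (\<Sum>j=Suc 0..m. f j)" by (rule sum.atLeast_Suc_atMost) simp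
  finally show ?thesis using n by simp
qed

lemma kap0: "kap 0 = Dg - 1"
proof -
  have "kap 0 = Dg * Eg" by (simp add: kap_def al_def Eg_def mult_ac)
  then show ?thesis by (simp add: DE')
qed

lemma part2: "1 \<le> r \<Longrightarrow> Ccoef 1 r = (-1) ^ r / (r + 1)"
proof -
  assume r1: "1 \<le> r"
  have "Ccoef 1 r = (-1) ^ r * kap 0 $ Suc (r - 1)" using C_eq[of 1 r] r1 by simp
  also have "\<dots> = (-1) ^ r * Dg $ r" using r1 by (simp add: kap0)
  finally show ?thesis by (simp add: Dg_def divide_inverse)
qed

lemma part1:
  fixes i r :: nat
  assumes ir: "1 \<le> i \<and> i < r"
  shows "Ccoef (i+1) r = Ccoef i r
              + (\<Sum>k=r-i+1..r-1. Ccoef (r-i+1) k * Ccoef (r-k) (r-k))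
              - (\<Sum>k=i..r-1. Ccoef i k * Ccoef (r-k) (r-k))"
proof -
  define p where "p = i"
  define q where "q = r - i"
  have p1: "1 \<le> p" and q1: "1 \<le> q" using ir by (auto simp: p_def q_def)
  have rpq: "r = p + q" using ir by (simp add: p_def q_def)
  define sg :: real where "sg = (-1) ^ r"
  have sgk: "\<And>k. k \<le> r \<Longrightarrow> (-1) ^ k * (-1) ^ (r - k) = sg"
    by (simp add: sg_def power_add[symmetric])
  have L: "Ccoef (i+1) r = sg * kap p $ q"
    using C_eq[of "i+1" r] ir by (simp add: sg_def p_def q_def Suc_diff_Suc)
  have C: "Ccoef i r = sg * kap (p - 1) $ Suc q"
    using C_eq[of i r] ir by (simp add: sg_def p_def q_def)
  have S1: "(\<Sum>k=r-i+1..r-1. Ccoef (r-i+1) k * Ccoef (r-k) (r-k)) = sg * (\<Sum>j=1..p-1. kap q $ (p - j) * Eg $ j)"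
  proof -
    have "(\<Sum>k=r-i+1..r-1. Ccoef (r-i+1) k * Ccoef (r-k) (r-k)) = (\<Sum>k=r-i+1..r-1. sg * (kap q $ (k - q) * Eg $ (r - k)))"
    proof (rule sum.cong[OF refl])
      fix k assume k: "k \<in> {r-i+1..r-1}"
      have kk: "r - i + 1 \<le> k" using k by simp
      have "Ccoef (r-i+1) k = (-1) ^ k * kap (r - i + 1 - 1) $ Suc (k - (r - i + 1))"
        by (rule C_eq) (use kk in auto)
      moreover have "r - i + 1 - 1 = q" "Suc (k - (r - i + 1)) = k - q" using kk by (auto simp: q_def)
      ultimately have a: "Ccoef (r-i+1) k = (-1) ^ k * kap q $ (k - q)" by simp
      have rk: "1 \<le> r - k" using k ir by (simp only: atLeastAtMost_iff) arith
      have b: "Ccoef (r-k) (r-k) = (-1) ^ (r - k) * Eg $ (r - k)"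
        using C_diag[OF rk] .
      have "Ccoef (r-i+1) k * Ccoef (r-k) (r-k) = ((-1) ^ k * (-1) ^ (r - k)) * (kap q $ (k - q) * Eg $ (r - k))"
        unfolding a b by (simp add: mult_ac)
      also have "\<dots> = sg * (kap q $ (k - q) * Eg $ (r - k))" using sgk[of k] k by (simp only: atLeastAtMost_iff) (simp, arith)
      finally show "Ccoef (r-i+1) k * Ccoef (r-k) (r-k) = sg * (kap q $ (k - q) * Eg $ (r - k))" .
    qed
    also have "\<dots> = sg * (\<Sum>k=r-i+1..r-1. kap q $ (k - q) * Eg $ (r - k))" by (simp add: sum_distrib_left)
    also have "(\<Sum>k=r-i+1..r-1. kap q $ (k - q) * Eg $ (r - k)) = (\<Sum>j=r-(r-1)..r-(r-i+1). kap q $ ((r - j) - q) * Eg $ (r - (r - j)))"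
      by (rule rev_sum; use ir in arith)
    also have "\<dots> = (\<Sum>j=1..p-1. kap q $ (p - j) * Eg $ j)"
      using ir by (intro sum.cong) (auto simp: p_def q_def)
    finally show ?thesis .
  qed
  have S2: "(\<Sum>k=i..r-1. Ccoef i k * Ccoef (r-k) (r-k)) = sg * (\<Sum>j=1..q. kap (p - 1) $ (Suc q - j) * Eg $ j)"
  proof -
    have "(\<Sum>k=i..r-1. Ccoef i k * Ccoef (r-k) (r-k)) = (\<Sum>k=i..r-1. sg * (kap (p - 1) $ Suc (k - i) * Eg $ (r - k)))"
    proof (rule sum.cong[OF refl])
      fix k assume k: "k \<in> {i..r-1}"
      have kk: "i \<le> k" using k by simp
      have a: "Ccoef i k = (-1) ^ k * kap (p - 1) $ Suc (k - i)"
        unfolding p_def by (rule C_eq) (use kk ir in auto)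
      have rk: "1 \<le> r - k" using k ir by (simp only: atLeastAtMost_iff) arith
      have b: "Ccoef (r-k) (r-k) = (-1) ^ (r - k) * Eg $ (r - k)"
        using C_diag[OF rk] .
      have "Ccoef i k * Ccoef (r-k) (r-k) = ((-1) ^ k * (-1) ^ (r - k)) * (kap (p - 1) $ Suc (k - i) * Eg $ (r - k))"
        unfolding a b by (simp add: mult_ac)
      also have "\<dots> = sg * (kap (p - 1) $ Suc (k - i) * Eg $ (r - k))" using sgk[of k] k by (simp only: atLeastAtMost_iff) (simp, arith)
      finally show "Ccoef i k * Ccoef (r-k) (r-k) = sg * (kap (p - 1) $ Suc (k - i) * Eg $ (r - k))" .
    qed
    also have "\<dots> = sg * (\<Sum>k=i..r-1. kap (p - 1) $ Suc (k - i) * Eg $ (r - k))" by (simp add: sum_distrib_left)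
    also have "(\<Sum>k=i..r-1. kap (p - 1) $ Suc (k - i) * Eg $ (r - k)) = (\<Sum>j=r-(r-1)..r-i. kap (p - 1) $ Suc ((r - j) - i) * Eg $ (r - (r - j)))"
      by (rule rev_sum; use ir in arith)
    also have "\<dots> = (\<Sum>j=1..q. kap (p - 1) $ (Suc q - j) * Eg $ j)"
      using ir by (intro sum.cong) (auto simp: p_def q_def Suc_diff_le add.commute)
    finally show ?thesis .
  qed
  have A1: "(\<Sum>j=0..p. Eg $ j * kap (p - j) $ q) = (\<Sum>j=1..p-1. kap q $ (p - j) * Eg $ j) + Eg $ p * Dg $ q"
  proof -
    have "(\<Sum>j=0..p. Eg $ j * kap (p - j) $ q) = Eg $ 0 * kap p $ q + (\<Sum>j=1..p-1. Eg $ j * kap (p - j) $ q) + Eg $ p * kap 0 $ q"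
      using sum_ends[OF p1, of "\<lambda>j. Eg $ j * kap (p - j) $ q"] by simp
    also have "(\<Sum>j=1..p-1. Eg $ j * kap (p - j) $ q) = (\<Sum>j=1..p-1. kap q $ (p - j) * Eg $ j)"
    proof (rule sum.cong[OF refl])
      fix j assume j: "j \<in> {1..p-1}"
      have "kap (p - j) $ q = kap q $ (p - j)" using kap_sym[of "p - j" q] j q1 by auto
      then show "Eg $ j * kap (p - j) $ q = kap q $ (p - j) * Eg $ j" by simp
    qed
    also have "kap 0 $ q = Dg $ q" using kap_sym[of 0 q] q1 by simp
    finally show ?thesis by simp
  qed
  have A2: "(\<Sum>j=0..Suc q. Eg $ j * kap (p - 1) $ (Suc q - j)) = (\<Sum>j=1..q. kap (p - 1) $ (Suc q - j) * Eg $ j)"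
    using sum_ends[of "Suc q" "\<lambda>j. Eg $ j * kap (p - 1) $ (Suc q - j)"] by (simp add: mult.commute)
  have key: "kap p $ q = kap (p - 1) $ Suc q + (\<Sum>j=1..p-1. kap q $ (p - j) * Eg $ j) - (\<Sum>j=1..q. kap (p - 1) $ (Suc q - j) * Eg $ j)"
    using coef_identity[OF p1, of q] A1 A2 by simp
  show "Ccoef (i+1) r = Ccoef i r
              + (\<Sum>k=r-i+1..r-1. Ccoef (r-i+1) k * Ccoef (r-k) (r-k))
              - (\<Sum>k=i..r-1. Ccoef i k * Ccoef (r-k) (r-k))"
    unfolding L C S1 S2 key by (simp add: algebra_simps)
qed

theorem theorem3p2:
  shows "(\<forall>i r. 1 \<le> i \<and> i < r \<longrightarrow>
            Ccoef (i+1) r = Ccoef i r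
              + (\<Sum>k=r-i+1..r-1. Ccoef (r-i+1) k * Ccoef (r-k) (r-k))
              - (\<Sum>k=i..r-1. Ccoef i k * Ccoef (r-k) (r-k)))
       \<and> (\<forall>r. 1 \<le> r \<longrightarrow> Ccoef 1 r = (-1) ^ r / (r + 1))"
  using part1 part2 by blast



end
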